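(* Let $\mathcal L$ be a linearly ordered non-discrete MV-algebra and let $\mathcal F,\mathcal G$ be filters (in the sense below). Then $\mathcal F\sqsubseteq\!\!\to\mathcal G=\{1\}$ if and only if either $\mathcal G\subseteq\mathcal F$, or there is $g\in L$ with $\mathcal G=[g,1]$ and $\mathcal F=\,]g,1]$.
   Context: $\mathcal L=(L,\oplus,\lnot,0)$ is a linearly ordered MV-algebra. We write $1=\lnot0$ and $x\to y=\lnot x\oplus y$. Non-discrete means no element has an immediate successor or an immediate predecessor. A "filter" means a nonempty proper upward-closed subset $\mathcal F$ of $L$ with kernel $\mathcal K(\mathcal F)=\{z:\forall a\notin\mathcal F,\ z\to a\notin\mathcal F\}=\{1\}$. We write $[g,1]=\{x:x\ge g\}$ and $]g,1]=\{x:x>g\}$. For upward-closed $\mathcal F$ and $a\in L$, let $\mathcal F_a=\{z:z\to a\notin\mathcal F\}$. For $\mathcal F\subseteq\mathcal G$ we put $\mathcal F\sqsubseteq\!\!\to\mathcal G=\bigcap_{a\in L\setminus\mathcal G}\mathcal F_a$, and in general $\mathcal F\sqsubseteq\!\!\to\mathcal G:=(\mathcal F\cap\mathcal G)\sqsubseteq\!\!\to\mathcal G$. *)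

theory Defs
  imports Main
begin

definition mv_algebra :: "('a \<Rightarrow> 'a \<Rightarrow> 'a) \<Rightarrow> ('a \<Rightarrow> 'a) \<Rightarrow> 'a \<Rightarrow> bool" where
  "mv_algebra pl ng z \<longleftrightarrow>
     (\<forall>x y w. pl (pl x y) w = pl x (pl y w)) \<and>
     (\<forall>x y. pl x y = pl y x) \<and>
     (\<forall>x. pl x z = x) \<and>
     (\<forall>x. ng (ng x) = x) \<and>
     (\<forall>x. pl x (ng z) = ng z) \<and>
     (\<forall>x y. pl (ng (pl (ng x) y)) y = pl (ng (pl (ng y) x)) x)"

definition mv_one :: "('a \<Rightarrow> 'a) \<Rightarrow> 'a \<Rightarrow> 'a" where
  "mv_one ng z = ng z"

definition mv_impl :: "('a \<Rightarrow> 'a \<Rightarrow> 'a) \<Rightarrow> ('a \<Rightarrow> 'a) \<Rightarrow> 'a \<Rightarrow> 'a \<Rightarrow> 'a" where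
  "mv_impl pl ng x y = pl (ng x) y"

definition mv_le :: "('a \<Rightarrow> 'a \<Rightarrow> 'a) \<Rightarrow> ('a \<Rightarrow> 'a) \<Rightarrow> 'a \<Rightarrow> 'a \<Rightarrow> 'a \<Rightarrow> bool" where
  "mv_le pl ng z x y \<longleftrightarrow> mv_impl pl ng x y = mv_one ng z"

definition mv_less :: "('a \<Rightarrow> 'a \<Rightarrow> 'a) \<Rightarrow> ('a \<Rightarrow> 'a) \<Rightarrow> 'a \<Rightarrow> 'a \<Rightarrow> 'a \<Rightarrow> bool" where
  "mv_less pl ng z x y \<longleftrightarrow> mv_le pl ng z x y \<and> x \<noteq> y"

definition linear_mv :: "('a \<Rightarrow> 'a \<Rightarrow> 'a) \<Rightarrow> ('a \<Rightarrow> 'a) \<Rightarrow> 'a \<Rightarrow> bool" where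
  "linear_mv pl ng z \<longleftrightarrow> mv_algebra pl ng z \<and>
     (\<forall>x y. mv_le pl ng z x y \<or> mv_le pl ng z y x)"

definition immediate_successor :: "('a \<Rightarrow> 'a \<Rightarrow> 'a) \<Rightarrow> ('a \<Rightarrow> 'a) \<Rightarrow> 'a \<Rightarrow> 'a \<Rightarrow> 'a \<Rightarrow> bool" where
  "immediate_successor pl ng z x y \<longleftrightarrow> mv_less pl ng z x y \<and>
     \<not> (\<exists>w. mv_less pl ng z x w \<and> mv_less pl ng z w y)"

definition non_discrete :: "('a \<Rightarrow> 'a \<Rightarrow> 'a) \<Rightarrow> ('a \<Rightarrow> 'a) \<Rightarrow> 'a \<Rightarrow> bool" where
  "non_discrete pl ng z \<longleftrightarrow>
     (\<forall>x. \<not> (\<exists>y. immediate_successor pl ng z x y)) \<and>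
     (\<forall>x. \<not> (\<exists>y. immediate_successor pl ng z y x))"

definition kernel :: "('a \<Rightarrow> 'a \<Rightarrow> 'a) \<Rightarrow> ('a \<Rightarrow> 'a) \<Rightarrow> 'a set \<Rightarrow> 'a set" where
  "kernel pl ng F = {w. \<forall>a. a \<notin> F \<longrightarrow> mv_impl pl ng w a \<notin> F}"

definition up_closed :: "('a \<Rightarrow> 'a \<Rightarrow> 'a) \<Rightarrow> ('a \<Rightarrow> 'a) \<Rightarrow> 'a \<Rightarrow> 'a set \<Rightarrow> bool" where
  "up_closed pl ng z F \<longleftrightarrow> (\<forall>x y. x \<in> F \<longrightarrow> mv_le pl ng z x y \<longrightarrow> y \<in> F)"

definition mv_filter :: "('a \<Rightarrow> 'a \<Rightarrow> 'a) \<Rightarrow> ('a \<Rightarrow> 'a) \<Rightarrow> 'a \<Rightarrow> 'a set \<Rightarrow> bool" where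
  "mv_filter pl ng z F \<longleftrightarrow> F \<noteq> {} \<and> F \<noteq> UNIV \<and> up_closed pl ng z F \<and>
     kernel pl ng F = {mv_one ng z}"

definition sub_a :: "('a \<Rightarrow> 'a \<Rightarrow> 'a) \<Rightarrow> ('a \<Rightarrow> 'a) \<Rightarrow> 'a set \<Rightarrow> 'a \<Rightarrow> 'a set" where
  "sub_a pl ng F a = {w. mv_impl pl ng w a \<notin> F}"

text \<open>F \<sqsubseteq>\<rightarrow> G := (F \<inter> G) \<sqsubseteq>\<rightarrow> G = \<Inter>_{a \<in> L \<setminus> G} (F \<inter> G)_a.\<close>
definition resid :: "('a \<Rightarrow> 'a \<Rightarrow> 'a) \<Rightarrow> ('a \<Rightarrow> 'a) \<Rightarrow> 'a set \<Rightarrow> 'a set \<Rightarrow> 'a set" where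
  "resid pl ng F G = (\<Inter>a\<in>(UNIV - G). sub_a pl ng (F \<inter> G) a)"

definition closed_up_int :: "('a \<Rightarrow> 'a \<Rightarrow> 'a) \<Rightarrow> ('a \<Rightarrow> 'a) \<Rightarrow> 'a \<Rightarrow> 'a \<Rightarrow> 'a set" where
  "closed_up_int pl ng z g = {x. mv_le pl ng z g x}"

definition open_up_int :: "('a \<Rightarrow> 'a \<Rightarrow> 'a) \<Rightarrow> ('a \<Rightarrow> 'a) \<Rightarrow> 'a \<Rightarrow> 'a \<Rightarrow> 'a set" where
  "open_up_int pl ng z g = {x. mv_less pl ng z g x}"

end

theory Submission
  imports Defs
begin

locale mvl =
  fixes pl :: "'a \<Rightarrow> 'a \<Rightarrow> 'a" and ng :: "'a \<Rightarrow> 'a" and z :: 'a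
  assumes ax: "mv_algebra pl ng z"
begin

lemma assoc: "pl (pl x y) w = pl x (pl y w)" using ax unfolding mv_algebra_def by blast
lemma comm: "pl x y = pl y x" using ax unfolding mv_algebra_def by blast
lemma zr: "pl x z = x" using ax unfolding mv_algebra_def by blast
lemma nn[simp]: "ng (ng x) = x" using ax unfolding mv_algebra_def by blast
lemma oner: "pl x (ng z) = ng z" using ax unfolding mv_algebra_def by blast
lemma luk: "pl (ng (pl (ng x) y)) y = pl (ng (pl (ng y) x)) x" using ax unfolding mv_algebra_def by blast

lemma zl: "pl z x = x" using zr comm by metis
lemma onel: "pl (ng z) x = ng z" using oner comm by metis
lemma compl: "pl (ng x) x = ng z"
  using luk[of "ng z" x] by (simp add: oner zl)

lemma le_def': "mv_le pl ng z x y \<longleftrightarrow> pl (ng x) y = ng z"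
  by (simp add: mv_le_def mv_impl_def mv_one_def)

lemma refl: "mv_le pl ng z x x" using compl le_def' by simp

lemma le_repr: "mv_le pl ng z x y \<Longrightarrow> y = pl (ng (pl (ng y) x)) x"
  using luk[of x y] by (simp add: le_def' zl)

lemma antisym: "mv_le pl ng z x y \<Longrightarrow> mv_le pl ng z y x \<Longrightarrow> x = y"
  using luk[of x y] by (simp add: le_def' zl)

lemma mono: "mv_le pl ng z x y \<Longrightarrow> mv_le pl ng z (pl c x) (pl c y)"
proof -
  assume h: "mv_le pl ng z x y"
  define t where "t = ng (pl (ng y) x)"
  have y: "y = pl t x" using le_repr[OF h] t_def by simp
  have "pl (ng (pl c x)) (pl c y) = pl (pl (ng (pl c x)) (pl c x)) t"
    using y assoc comm by metis
  also have "\<dots> = ng z" by (simp add: compl onel)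
  finally show ?thesis by (simp add: le_def')
qed

lemma trans: "mv_le pl ng z x y \<Longrightarrow> mv_le pl ng z y w \<Longrightarrow> mv_le pl ng z x w"
proof -
  assume h1: "mv_le pl ng z x y" and h2: "mv_le pl ng z y w"
  have "mv_le pl ng z (pl (ng x) y) (pl (ng x) w)" using mono[OF h2] .
  then have "mv_le pl ng z (ng z) (pl (ng x) w)" using h1 by (simp add: le_def')
  then have "pl (ng x) w = ng z" by (simp add: le_def' zl)
  then show ?thesis by (simp add: le_def')
qed

lemma le_one: "mv_le pl ng z x (ng z)" by (simp add: le_def' oner)

lemma neg_anti: "mv_le pl ng z x y \<Longrightarrow> mv_le pl ng z (ng y) (ng x)"
  by (simp add: le_def' comm)

lemma impl_anti: "mv_le pl ng z w v \<Longrightarrow>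
   mv_le pl ng z (mv_impl pl ng v a) (mv_impl pl ng w a)"
  unfolding mv_impl_def using mono[OF neg_anti] comm by metis

lemma impl_mono: "mv_le pl ng z a b \<Longrightarrow>
   mv_le pl ng z (mv_impl pl ng w a) (mv_impl pl ng w b)"
  unfolding mv_impl_def using mono by metis

lemma impl_one: "mv_impl pl ng (ng z) a = a" by (simp add: mv_impl_def zl)

lemma impl_impl: "mv_le pl ng z b1 b2 \<Longrightarrow> mv_impl pl ng (mv_impl pl ng b2 b1) b1 = b2"
  using luk[of b2 b1] by (simp add: le_def' mv_impl_def zl)

lemma cancel:
  assumes lin: "\<And>x y. mv_le pl ng z x y \<or> mv_le pl ng z y x"
    and h: "mv_le pl ng z x y" and e: "pl x a = pl y a" and ne: "pl x a \<noteq> ng z"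
  shows "x = y"
proof -
  define t where "t = ng (pl (ng y) x)"
  have y: "y = pl t x" using le_repr[OF h] t_def by simp
  define s where "s = pl x a"
  have st: "pl s t = s" using e y s_def assoc comm by metis
  have id: "pl s (ng (pl s t)) = pl (ng (pl (ng s) (ng t))) (ng t)"
    using luk[of "ng t" s] comm by simp
  have "pl s (ng (pl s t)) = ng z" using st compl comm by metis
  hence m: "ng (pl (ng (pl (ng s) (ng t))) (ng t)) = z" using id by simp
  have "t = z"
  proof (cases "mv_le pl ng z t (ng s)")
    case True
    hence "pl (ng t) (ng s) = ng z" by (simp add: le_def')
    hence "pl (ng s) (ng t) = ng z" using comm by metis
    thus ?thesis using m by (simp add: zl)
  next
    case False
    hence "mv_le pl ng z (ng s) t" using lin by blast
    hence "pl s t = ng z" by (simp add: le_def')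
    thus ?thesis using st ne s_def by simp
  qed
  thus ?thesis using y zl by simp
qed

end

theorem mainTheorem16:
  fixes pl :: "'a \<Rightarrow> 'a \<Rightarrow> 'a" and ng :: "'a \<Rightarrow> 'a" and z :: 'a
    and F G :: "'a set"
  assumes "linear_mv pl ng z"
    and "non_discrete pl ng z"
    and "mv_filter pl ng z F"
    and "mv_filter pl ng z G"
  shows "resid pl ng F G = {mv_one ng z} \<longleftrightarrow>
           (G \<subseteq> F \<or>
            (\<exists>g. G = closed_up_int pl ng z g \<and> F = open_up_int pl ng z g))"
proof -
  interpret mvl pl ng z using assms(1) by (unfold_locales, simp add: linear_mv_def)
  have lin: "\<And>x y. mv_le pl ng z x y \<or> mv_le pl ng z y x" using assms(1) by (simp add: linear_mv_def)
  have one: "mv_one ng z = ng z" by (simp add: mv_one_def)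
  have upF: "\<And>x y. x \<in> F \<Longrightarrow> mv_le pl ng z x y \<Longrightarrow> y \<in> F"
    using assms(3) by (simp add: mv_filter_def up_closed_def)
  have upG: "\<And>x y. x \<in> G \<Longrightarrow> mv_le pl ng z x y \<Longrightarrow> y \<in> G"
    using assms(4) by (simp add: mv_filter_def up_closed_def)
  have kerG: "kernel pl ng G = {ng z}" using assms(4) by (simp add: mv_filter_def one)
  have Fne: "F \<noteq> {}" using assms(3) by (simp add: mv_filter_def)
  have memR: "\<And>w. w \<in> resid pl ng F G \<longleftrightarrow> (\<forall>a. a \<notin> G \<longrightarrow> mv_impl pl ng w a \<notin> F \<inter> G)"
    by (auto simp: resid_def sub_a_def)
  show ?thesis
  proof
    assume R: "resid pl ng F G = {mv_one ng z}"
    show "G \<subseteq> F \<or> (\<exists>g. G = closed_up_int pl ng z g \<and> F = open_up_int pl ng z g)"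
    proof (cases "G \<subseteq> F")
      case True thus ?thesis by simp
    next
      case False
      then obtain c where cG: "c \<in> G" and cF: "c \<notin> F" by blast
      have key: "b1 = b2" if b1: "b1 \<in> G" "b1 \<notin> F" and b2: "b2 \<in> G" "b2 \<notin> F"
        and le12: "mv_le pl ng z b1 b2" for b1 b2
      proof -
        define w where "w = mv_impl pl ng b2 b1"
        have "w \<in> resid pl ng F G"
          unfolding memR
        proof (intro allI impI)
          fix a assume aG: "a \<notin> G"
          have "mv_le pl ng z a b1" using lin[of a b1] upG b1(1) aG by blast
          hence "mv_le pl ng z (mv_impl pl ng w a) b2"
            using impl_mono[of a b1 w] impl_impl[OF le12] w_def by simp
          thus "mv_impl pl ng w a \<notin> F \<inter> G" using upF b2(2) by blast
        qed
        hence "w = ng z" using R one by simp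
        hence "mv_le pl ng z b2 b1" using w_def by (simp add: mv_le_def mv_one_def)
        thus ?thesis using antisym le12 by blast
      qed
      have uniq: "b = c" if "b \<in> G" "b \<notin> F" for b
      proof (cases "mv_le pl ng z b c")
        case True show ?thesis using key[OF that cG cF True] .
      next
        case False hence "mv_le pl ng z c b" using lin by blast
        show ?thesis using key[OF cG cF that \<open>mv_le pl ng z c b\<close>] by simp
      qed
      have "G = closed_up_int pl ng z c"
      proof (auto simp: closed_up_int_def intro: upG[OF cG])
        fix x assume xG: "x \<in> G"
        show "mv_le pl ng z c x"
        proof (cases "mv_le pl ng z x c")
          case True
          hence "x \<notin> F" using upF cF by blast
          hence "x = c" using uniq xG by blast
          thus ?thesis using refl by simp
        next
          case False thus ?thesis using lin by blast
        qed
      qed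
      moreover have "F = open_up_int pl ng z c"
      proof (rule set_eqI)
        fix x
        show "x \<in> F \<longleftrightarrow> x \<in> open_up_int pl ng z c"
        proof
          assume xF: "x \<in> F"
          have "mv_le pl ng z c x" using lin[of x c] upF[OF xF] cF by blast
          moreover have "c \<noteq> x" using xF cF by auto
          ultimately show "x \<in> open_up_int pl ng z c" by (simp add: open_up_int_def mv_less_def)
        next
          assume "x \<in> open_up_int pl ng z c"
          hence "mv_le pl ng z c x" "c \<noteq> x" by (auto simp: open_up_int_def mv_less_def)
          thus "x \<in> F" using upG[OF cG] uniq by blast
        qed
      qed
      ultimately show ?thesis by blast
    qed
  next
    assume H: "G \<subseteq> F \<or> (\<exists>g. G = closed_up_int pl ng z g \<and> F = open_up_int pl ng z g)"
    show "resid pl ng F G = {mv_one ng z}"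
    proof (cases "G \<subseteq> F")
      case True
      hence "F \<inter> G = G" by blast
      have "resid pl ng F G = kernel pl ng G"
      proof (rule set_eqI)
        fix w
        show "w \<in> resid pl ng F G \<longleftrightarrow> w \<in> kernel pl ng G"
          unfolding memR[of w] kernel_def using \<open>F \<inter> G = G\<close> by simp
      qed
      thus ?thesis using kerG one by simp
    next
      case False
      then obtain g where G: "G = closed_up_int pl ng z g" and F: "F = open_up_int pl ng z g"
        using H by blast
      have mG: "\<And>x. x \<in> G \<longleftrightarrow> mv_le pl ng z g x" using G by (simp add: closed_up_int_def)
      have mF: "\<And>x. x \<in> F \<longleftrightarrow> mv_le pl ng z g x \<and> g \<noteq> x" using F by (simp add: open_up_int_def mv_less_def)
      have g1: "g \<noteq> ng z"
      proof
        assume "g = ng z"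
        obtain x where "x \<in> F" using Fne by blast
        hence "mv_le pl ng z (ng z) x" "ng z \<noteq> x" using mF \<open>g = ng z\<close> by auto
        thus False using antisym le_one by metis
      qed
      have oneR: "ng z \<in> resid pl ng F G"
        unfolding memR by (simp add: impl_one)
      have allR: "w = ng z" if wR: "w \<in> resid pl ng F G" for w
      proof (rule ccontr)
        assume wn: "w \<noteq> ng z"
        have "mv_less pl ng z w (ng z)" using wn le_one by (simp add: mv_less_def)
        then obtain v where wv: "mv_less pl ng z w v" and v1: "mv_less pl ng z v (ng z)"
          using assms(2) unfolding non_discrete_def immediate_successor_def by blast
        have "v \<notin> kernel pl ng G" using kerG v1 by (simp add: mv_less_def)
        then obtain a where aG: "a \<notin> G" and vaG: "mv_impl pl ng v a \<in> G"
          by (auto simp: kernel_def)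
        have wvle: "mv_le pl ng z (mv_impl pl ng v a) (mv_impl pl ng w a)"
          using impl_anti wv by (simp add: mv_less_def)
        have gv: "mv_le pl ng z g (mv_impl pl ng v a)" using vaG mG by simp
        have gw: "mv_le pl ng z g (mv_impl pl ng w a)" using trans[OF gv wvle] .
        have "mv_impl pl ng w a \<notin> F \<inter> G" using wR aG memR by blast
        hence eqw: "mv_impl pl ng w a = g" using gw mF mG by auto
        hence eqv: "mv_impl pl ng v a = g" using antisym gv wvle by simp
        have "ng v = ng w"
          apply (rule cancel[OF lin, of "ng v" "ng w" a])
          using neg_anti wv eqw eqv g1 by (auto simp: mv_less_def mv_impl_def)
        hence "v = w" by (metis nn)
        thus False using wv by (simp add: mv_less_def)
      qed
      have "resid pl ng F G = {ng z}"
      proof (rule set_eqI)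
        fix w show "w \<in> resid pl ng F G \<longleftrightarrow> w \<in> {ng z}"
          using oneR allR[of w] by auto
      qed
      thus ?thesis using one by simp
    qed
  qed
qed

end
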